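(* Let $\phi:v_{\mathcal{C},j}\mapsto y^{n_{\mathcal{C},j}}$ be a cyclotomic specialization and let $\chi,\psi\in\mathrm{Irr}(W)$ with sets of factor degrees $\mathcal{F}_\chi,\mathcal{F}_\psi$ (with respect to fixed factorizations of their generic Schur elements). If $a_{\chi,\epsilon}(\mathbf{t})=a_{\psi,\epsilon}(\mathbf{t})$ (resp. $A_{\chi,\epsilon}(\mathbf{t})=A_{\psi,\epsilon}(\mathbf{t})$) as polynomials in $\mathbf{t}$ for every good sign map $\epsilon$ for $\mathcal{F}_\chi\cup\mathcal{F}_\psi$, then $a_{\chi_\phi}=a_{\psi_\phi}$ (resp. $A_{\chi_\phi}=A_{\psi_\phi}$).
   Context: Setting: $K\subset\mathbb{Q}(\mu_\infty)$ a number field with ring of integers $\mathbb{Z}_K$; $W$ a finite irreducible complex reflection group defined over $K$, reflecting-hyperplane orbits $\mathcal{C}$ with stabilizer orders $e_{\mathcal{C}}$; $\mathcal{H}$ its generic Hecke algebra (assumed free of rank $|W|$ with canonical symmetrizing form), over $\mathbb{Z}_K[\mathbf{v},\mathbf{v}^{-1}]$ with indeterminates $v_{\mathcal{C},j}$, $0\le j\le e_{\mathcal{C}}-1$ (Hecke parameters $u_{\mathcal{C},j}=\zeta_{e_{\mathcal{C}}}^jv_{\mathcal{C},j}^{|\mu(K)|}$). For $\chi\in\mathrm{Irr}(W)$, the generic Schur element is fixed in the factorized form $(\dagger)\ s_\chi(\mathbf{v})=\xi_\chi N_\chi\prod_{i\in I_\chi}\Psi_{\chi,i}(M_{\chi,i})^{n_{\chi,i}}$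 with $\xi_\chi\in\mathbb{Z}_K$, $N_\chi=\prod v_{\mathcal{C},j}^{b_{\mathcal{C},j}}$ ($\sum_jb_{\mathcal{C},j}=0$ for all $\mathcal{C}$), $\Psi_{\chi,i}$ $K$-cyclotomic polynomials in one variable, $M_{\chi,i}=\prod v_{\mathcal{C},j}^{a_{\mathcal{C},j}}$ monomials with $\gcd(a_{\mathcal{C},j})=1$ and $\sum_ja_{\mathcal{C},j}=0$ for all $\mathcal{C}$, $n_{\chi,i}$ positive integers. Factor degrees: let $\mathbf{t}=(t_{\mathcal{C},j})$ be indeterminates. For a factor $\Psi(M)$ of $(\dagger)$ with $M=\prod v_{\mathcal{C},j}^{a_{\mathcal{C},j}}$, its factor degree is $f_{\Psi(M)}(\mathbf{t})=\deg(\Psi)\sum_{\mathcal{C},j}a_{\mathcal{C},j}t_{\mathcal{C},j}$, and its coefficient $\mathbf{c}(f_{\Psi(M)})$ is the largest $n$ such that $\Psi(M)^n$ appears in $(\dagger)$. $\mathcal{F}_\chi$ is the set of factor degrees for $\chi$. Two factor degrees satisfy $f_1\sim f_2$ if $f_1=qf_2$ for some rational $q>0$. A good sign map for a set $\mathcal{F}$ of factor degrees is a map $\epsilon:\mathcal{F}\to\{-1,1\}$ with $\epsilon(f_1)=\epsilon(f_2)$ whenever $f_1\sim f_2$ and $\epsilon(f_1)=-\epsilon(f_2)$ whenever $f_1\sim -f_2$. For a good sign map $\epsilon$ (restricted to $\mathcal{F}_\chi$), the generic valuation and generic degree are $a_{\chi,\epsilon}(\mathbf{t})=\sum_{\mathcal{C},j}b_{\mathcal{C},j}t_{\mathcal{C},j}+\sum_{f\in\mathcal{F}_\chi,\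 \epsilon(f)=-1}\mathbf{c}(f)f$, and $A_{\chi,\epsilon}(\mathbf{t})=\sum_{\mathcal{C},j}b_{\mathcal{C},j}t_{\mathcal{C},j}+\sum_{f\in\mathcal{F}_\chi,\ \epsilon(f)=1}\mathbf{c}(f)f$. A cyclotomic specialization is a $\mathbb{Z}_K$-algebra morphism $\phi:v_{\mathcal{C},j}\mapsto y^{n_{\mathcal{C},j}}$ ($n_{\mathcal{C},j}\in\mathbb{Z}$) into $\mathbb{Z}_K[y,y^{-1}]$ such that each $\prod_j(z-\zeta_{e_{\mathcal{C}}}^jy^{n_{\mathcal{C},j}})$ is invariant under $\mathrm{Gal}(K(y)/K(y^{|\mu(K)|}))$; $\chi_\phi$ is the corresponding character of the specialized algebra, with Schur element $s_{\chi_\phi}(y)=\phi(s_\chi(\mathbf{v}))$, $a_{\chi_\phi}$ its valuation (order at $y=0$) and $A_{\chi_\phi}$ its degree ($-$order at $0$ of $s_{\chi_\phi}(1/y)$). *)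

theory Defs
  imports "HOL-Computational_Algebra.Computational_Algebra" "HOL-Library.Multiset" Complex_Main
begin

definition subfield_C :: "complex set \<Rightarrow> bool" where
  "subfield_C K \<longleftrightarrow> 0 \<in> K \<and> 1 \<in> K \<and>
     (\<forall>x\<in>K. \<forall>y\<in>K. x + y \<in> K \<and> x - y \<in> K \<and> x * y \<in> K) \<and>
     (\<forall>x\<in>K. x \<noteq> 0 \<longrightarrow> inverse x \<in> K)"

definition root_unity :: "nat \<Rightarrow> complex" where
  "root_unity d = cis (2 * pi / real d)"

definition cyc_field :: "nat \<Rightarrow> complex set" where
  "cyc_field d = {poly (map_poly of_rat p) (root_unity d) | p :: rat poly. True}"

text \<open>K is a number field contained in Q(mu_infinity): a subfield of some Q(zeta_d).\<close>
definition cyclotomic_number_field :: "complex set \<Rightarrow> bool" where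
  "cyclotomic_number_field K \<longleftrightarrow> subfield_C K \<and> (\<exists>d>0. K \<subseteq> cyc_field d)"

definition roots_of_unity_in :: "complex set \<Rightarrow> complex set" where
  "roots_of_unity_in K = {z \<in> K. \<exists>n>0. z ^ n = 1}"

definition ring_of_integers :: "complex set \<Rightarrow> complex set" where
  "ring_of_integers K = {x \<in> K. algebraic_int x}"

definition coeffs_in :: "complex set \<Rightarrow> complex poly \<Rightarrow> bool" where
  "coeffs_in K p \<longleftrightarrow> (\<forall>i. coeff p i \<in> K)"

text \<open>K-cyclotomic polynomial: a monic polynomial over K, irreducible over K,
  dividing x^d - 1 for some d > 0 (i.e. an irreducible K-factor of some Phi_d).\<close>
definition K_cyclotomic :: "complex set \<Rightarrow> complex poly \<Rightarrow> bool" where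
  "K_cyclotomic K P \<longleftrightarrow> coeffs_in K P \<and> lead_coeff P = 1 \<and> degree P > 0 \<and>
     (\<forall>p q. coeffs_in K p \<longrightarrow> coeffs_in K q \<longrightarrow> P = p * q \<longrightarrow> degree p = 0 \<or> degree q = 0) \<and>
     (\<exists>d>0. P dvd (monom 1 d - 1))"

text \<open>Variables v_{C,j} are indexed by pairs (C,j) with C in the set of hyperplane
  orbits Cs and j < e C. Exponent vectors are functions on such pairs.\<close>
definition var_set :: "'c set \<Rightarrow> ('c \<Rightarrow> nat) \<Rightarrow> ('c \<times> nat) set" where
  "var_set Cs e = {(C, j). C \<in> Cs \<and> j < e C}"

text \<open>A factorized form (dagger): constant xi, exponent vector b of N, and a list of
  factors (Psi_i, a_i, n_i) standing for Psi_i(M_i)^{n_i} with M_i = prod v^{a_i}.\<close>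
type_synonym 'c factorization =
  "complex \<times> ('c \<times> nat \<Rightarrow> int) \<times> (complex poly \<times> ('c \<times> nat \<Rightarrow> int) \<times> nat) list"

definition zero_sum_on_orbits :: "'c set \<Rightarrow> ('c \<Rightarrow> nat) \<Rightarrow> ('c \<times> nat \<Rightarrow> int) \<Rightarrow> bool" where
  "zero_sum_on_orbits Cs e a \<longleftrightarrow> (\<forall>C\<in>Cs. (\<Sum>j<e C. a (C, j)) = 0)"

definition valid_factorization ::
  "complex set \<Rightarrow> 'c set \<Rightarrow> ('c \<Rightarrow> nat) \<Rightarrow> 'c factorization \<Rightarrow> bool" where
  "valid_factorization K Cs e F \<longleftrightarrow>
     (case F of (\<xi>, b, fs) \<Rightarrow>
        \<xi> \<in> ring_of_integers K \<and>
        zero_sum_on_orbits Cs e b \<and> (\<forall>v. v \<notin> var_set Cs e \<longrightarrow> b v = 0) \<and>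
        (\<forall>(P, a, n) \<in> set fs.
           K_cyclotomic K P \<and> n > 0 \<and>
           zero_sum_on_orbits Cs e a \<and> (\<forall>v. v \<notin> var_set Cs e \<longrightarrow> a v = 0) \<and>
           Gcd (a ` var_set Cs e) = 1))"

text \<open>A linear form sum_{C,j} c_{C,j} t_{C,j} is represented by its coefficient function
  (zero outside the variable set); equality of such functions is equality as polynomials.\<close>
type_synonym 'c linform = "'c \<times> nat \<Rightarrow> rat"

definition factor_degree :: "complex poly \<Rightarrow> ('c \<times> nat \<Rightarrow> int) \<Rightarrow> 'c linform" where
  "factor_degree P a = (\<lambda>v. of_nat (degree P) * of_int (a v))"

definition factor_degrees :: "'c factorization \<Rightarrow> 'c linform set" where
  "factor_degrees F = (\<lambda>(P, a, n). factor_degree P a) ` set (snd (snd F))"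

definition fd_coeff :: "'c factorization \<Rightarrow> 'c linform \<Rightarrow> nat" where
  "fd_coeff F f = sum_list (map (\<lambda>(P, a, n). if factor_degree P a = f then n else 0) (snd (snd F)))"

definition fd_equiv :: "'c linform \<Rightarrow> 'c linform \<Rightarrow> bool" where
  "fd_equiv f1 f2 \<longleftrightarrow> (\<exists>q::rat. q > 0 \<and> f1 = (\<lambda>v. q * f2 v))"

definition good_sign_map :: "'c linform set \<Rightarrow> ('c linform \<Rightarrow> int) \<Rightarrow> bool" where
  "good_sign_map FS \<epsilon> \<longleftrightarrow>
     (\<forall>f\<in>FS. \<epsilon> f \<in> {-1, 1}) \<and>
     (\<forall>f1\<in>FS. \<forall>f2\<in>FS. fd_equiv f1 f2 \<longrightarrow> \<epsilon> f1 = \<epsilon> f2) \<and>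
     (\<forall>f1\<in>FS. \<forall>f2\<in>FS. fd_equiv f1 (\<lambda>v. - f2 v) \<longrightarrow> \<epsilon> f1 = - \<epsilon> f2)"

definition generic_valuation :: "'c factorization \<Rightarrow> ('c linform \<Rightarrow> int) \<Rightarrow> 'c linform" where
  "generic_valuation F \<epsilon> = (\<lambda>v. of_int (fst (snd F) v) +
      (\<Sum>f\<in>{f \<in> factor_degrees F. \<epsilon> f = -1}. of_nat (fd_coeff F f) * f v))"

definition generic_degree :: "'c factorization \<Rightarrow> ('c linform \<Rightarrow> int) \<Rightarrow> 'c linform" where
  "generic_degree F \<epsilon> = (\<lambda>v. of_int (fst (snd F) v) +
      (\<Sum>f\<in>{f \<in> factor_degrees F. \<epsilon> f = 1}. of_nat (fd_coeff F f) * f v))"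

text \<open>For each orbit C, the polynomial prod_j (z - zeta_e^j y^{n_{C,j}}) is invariant under
  Gal(K(y)/K(y^{|mu(K)|})), whose elements are y \<mapsto> zeta*y for zeta in mu(K); equivalently
  the multiset of its roots zeta_e^j y^{n_{C,j}} (encoded as (coefficient, exponent)) is invariant.\<close>
definition cyclotomic_specialization ::
  "complex set \<Rightarrow> 'c set \<Rightarrow> ('c \<Rightarrow> nat) \<Rightarrow> ('c \<times> nat \<Rightarrow> int) \<Rightarrow> bool" where
  "cyclotomic_specialization K Cs e m \<longleftrightarrow>
     (\<forall>C\<in>Cs. \<forall>\<zeta>\<in>roots_of_unity_in K.
        image_mset (\<lambda>j. (root_unity (e C) ^ j, m (C, j))) (mset_set {..<e C}) =
        image_mset (\<lambda>j. (root_unity (e C) ^ j * \<zeta> powi m (C, j), m (C, j))) (mset_set {..<e C}))"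

definition lmono :: "int \<Rightarrow> complex fls" where
  "lmono k = fls_X_intpow k"

definition poly_at_mono :: "complex poly \<Rightarrow> int \<Rightarrow> complex fls" where
  "poly_at_mono P k = poly (map_poly fls_const P) (lmono k)"

definition pair_exp :: "('c \<times> nat) set \<Rightarrow> ('c \<times> nat \<Rightarrow> int) \<Rightarrow> ('c \<times> nat \<Rightarrow> int) \<Rightarrow> int" where
  "pair_exp V a m = (\<Sum>v\<in>V. a v * m v)"

text \<open>The specialized Schur element phi(s_chi)(y) in Z_K[y,y^-1], phi: v_{C,j} \<mapsto> y^{m(C,j)}.\<close>
definition specialized_schur ::
  "'c set \<Rightarrow> ('c \<Rightarrow> nat) \<Rightarrow> ('c \<times> nat \<Rightarrow> int) \<Rightarrow> 'c factorization \<Rightarrow> complex fls" where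
  "specialized_schur Cs e m F =
     (case F of (\<xi>, b, fs) \<Rightarrow>
        fls_const \<xi> * lmono (pair_exp (var_set Cs e) b m) *
        prod_list (map (\<lambda>(P, a, n). poly_at_mono P (pair_exp (var_set Cs e) a m) ^ n) fs))"

definition spec_valuation ::
  "'c set \<Rightarrow> ('c \<Rightarrow> nat) \<Rightarrow> ('c \<times> nat \<Rightarrow> int) \<Rightarrow> 'c factorization \<Rightarrow> int" where
  "spec_valuation Cs e m F = fls_subdegree (specialized_schur Cs e m F)"

text \<open>Degree A_{chi_phi}: minus the order at 0 of s(1/y); s(1/y) is the specialization
  at the negated exponents.\<close>
definition spec_degree ::
  "'c set \<Rightarrow> ('c \<Rightarrow> nat) \<Rightarrow> ('c \<times> nat \<Rightarrow> int) \<Rightarrow> 'c factorization \<Rightarrow> int" where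
  "spec_degree Cs e m F = - fls_subdegree (specialized_schur Cs e (\<lambda>v. - m v) F)"

end

theory Submission
  imports Defs
begin

lemma pam_nth:
  "fls_nth (poly_at_mono P k) j = (\<Sum>i\<le>degree P. if int i * k = j then coeff P i else 0)"
proof -
  have deg: "degree (map_poly fls_const P) = degree P"
    by (rule degree_map_poly) (simp add: fls_const_nonzero)
  have "poly_at_mono P k = (\<Sum>i\<le>degree P. fls_const (coeff P i) * fls_X_intpow (int i * k))"
    unfolding poly_at_mono_def lmono_def poly_altdef deg
    by (simp add: coeff_map_poly fls_X_intpow_power)
  then show ?thesis
    by (auto simp: fls_nth_sum intro!: sum.cong)
qed

lemma sum_single:
  fixes d i0 :: nat
  assumes "i0 \<le> d" "\<And>i. i \<le> d \<Longrightarrow> Q i \<longleftrightarrow> i = i0"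
  shows "(\<Sum>i\<le>d. if Q i then c i else 0) = (c i0 :: complex)"
proof -
  have "(\<Sum>i\<le>d. if Q i then c i else 0) = (\<Sum>i\<le>d. if i = i0 then c i else 0)"
    by (rule sum.cong) (use assms in auto)
  also have "\<dots> = c i0" using assms(1) by (subst sum.delta) (auto simp del: sum.delta intro: finite_atMost)
  finally show ?thesis .
qed

lemma sum_none:
  fixes d :: nat
  assumes "\<And>i. i \<le> d \<Longrightarrow> \<not> Q i"
  shows "(\<Sum>i\<le>d. if Q i then c i else 0) = (0 :: complex)"
  using assms by (intro sum.neutral) auto

lemma pam_nz:
  assumes "k \<noteq> 0" "P \<noteq> 0"
  shows "poly_at_mono P k \<noteq> 0"
proof -
  have "fls_nth (poly_at_mono P k) (int (degree P) * k) = coeff P (degree P)"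
    unfolding pam_nth using assms(1) by (intro sum_single) auto
  then show ?thesis using assms(2) by auto
qed

lemma pam_sub:
  assumes "coeff P 0 \<noteq> 0" "P \<noteq> 0" "poly_at_mono P k \<noteq> 0"
  shows "fls_subdegree (poly_at_mono P k) = min 0 (int (degree P) * k)"
proof (cases "k = 0")
  case True
  have "fls_nth (poly_at_mono P k) j = 0" if "j \<noteq> 0" for j
    unfolding pam_nth using True that by (intro sum_none) auto
  then have "poly_at_mono P k = fls_const (fls_nth (poly_at_mono P k) 0)"
    by (intro fls_eqI) auto
  then have "fls_subdegree (poly_at_mono P k) = 0" by (metis fls_const_subdegree)
  then show ?thesis using True by simp
next
  case False
  show ?thesis
  proof (cases "k > 0")
    case True
    have "fls_nth (poly_at_mono P k) 0 = coeff P 0"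
      unfolding pam_nth using True by (intro sum_single) auto
    moreover have "fls_nth (poly_at_mono P k) j = 0" if "j < 0" for j
      unfolding pam_nth using True that
      by (intro sum_none) (smt (verit) mult_nonneg_nonneg of_nat_0_le_iff)
    ultimately have "fls_subdegree (poly_at_mono P k) = 0"
      using assms(1) by (intro fls_subdegree_eqI) auto
    then show ?thesis using True by (simp add: min_def zero_le_mult_iff)
  next
    case False2: False
    then have kn: "k < 0" using False by simp
    have "fls_nth (poly_at_mono P k) (int (degree P) * k) = coeff P (degree P)"
      unfolding pam_nth using kn by (intro sum_single) auto
    moreover have "fls_nth (poly_at_mono P k) j = 0" if "j < int (degree P) * k" for j
      unfolding pam_nth
    proof (intro sum_none)
      fix i assume "i \<le> degree P"
      then have "int i * k \<ge> int (degree P) * k" using kn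
        by (intro mult_right_mono_neg) auto
      then show "\<not> int i * k = j" using that by auto
    qed
    ultimately have "fls_subdegree (poly_at_mono P k) = int (degree P) * k"
      using assms(2) by (intro fls_subdegree_eqI) auto
    moreover have "int (degree P) * k \<le> 0" using kn by (simp add: mult_nonneg_nonpos)
    ultimately show ?thesis by simp
  qed
qed

lemma cyc_props:
  assumes "K_cyclotomic K P"
  shows "coeff P 0 \<noteq> 0" "P \<noteq> 0"
proof -
  from assms obtain d where d: "d > 0" "P dvd (monom 1 d - 1)" and l: "lead_coeff P = 1"
    unfolding K_cyclotomic_def by auto
  then obtain Q where Q: "monom 1 d - 1 = P * Q" by (auto elim: dvdE)
  have "coeff (monom (1::complex) d - 1) 0 = -1" using d by simp
  then have "coeff P 0 * coeff Q 0 = -1" using Q by (simp add: coeff_mult_0)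
  then show "coeff P 0 \<noteq> 0" by auto
  show "P \<noteq> 0" using l by auto
qed

lemma prodlist_sub:
  "0 \<notin> set xs \<Longrightarrow> fls_subdegree (prod_list xs :: complex fls) = sum_list (map fls_subdegree xs)"
proof (induction xs)
  case (Cons a xs)
  then have "prod_list xs \<noteq> 0" by (auto simp: prod_list_zero_iff)
  then show ?case using Cons by (simp add: fls_subdegree_mult)
qed simp

lemma pe_neg: "pair_exp V a (\<lambda>v. - m v) = - pair_exp V a m"
  unfolding pair_exp_def by (simp add: sum_negf)

lemma ss_formula:
  assumes v: "valid_factorization K Cs e F" and nz: "specialized_schur Cs e m F \<noteq> 0"
  shows "fls_subdegree (specialized_schur Cs e m F) = pair_exp (var_set Cs e) (fst (snd F)) m
     + sum_list (map (\<lambda>(P,a,n). int n * min 0 (int (degree P) * pair_exp (var_set Cs e) a m)) (snd (snd F)))"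
proof -
  obtain \<xi> b fs where F: "F = (\<xi>, b, fs)" by (cases F) auto
  define V where "V = var_set Cs e"
  define xs where "xs = map (\<lambda>(P, a, n). poly_at_mono P (pair_exp V a m) ^ n) fs"
  have ss: "specialized_schur Cs e m F = fls_const \<xi> * lmono (pair_exp V b m) * prod_list xs"
    unfolding specialized_schur_def F xs_def V_def by simp
  from nz have x0: "\<xi> \<noteq> 0" and p0: "prod_list xs \<noteq> 0" unfolding ss by auto
  from p0 have nx: "0 \<notin> set xs" by (auto simp: prod_list_zero_iff)
  have fsv: "\<And>P a n. (P,a,n) \<in> set fs \<Longrightarrow> K_cyclotomic K P \<and> n > 0"
    using v unfolding valid_factorization_def F by auto
  have "fls_subdegree (prod_list xs) = sum_list (map fls_subdegree xs)"
    by (rule prodlist_sub[OF nx])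
  also have "map fls_subdegree xs =
      map (\<lambda>(P,a,n). int n * min 0 (int (degree P) * pair_exp V a m)) fs"
    unfolding xs_def map_map
  proof (rule map_cong[OF refl])
    fix x assume x: "x \<in> set fs"
    obtain P a n where xe: "x = (P,a,n)" by (cases x) auto
    have pw: "poly_at_mono P (pair_exp V a m) ^ n \<noteq> 0" using nx x xe unfolding xs_def by force
    have n0: "n > 0" and cy: "K_cyclotomic K P" using fsv x xe by auto
    have pz: "poly_at_mono P (pair_exp V a m) \<noteq> 0" using pw n0 by auto
    show "(fls_subdegree \<circ> (\<lambda>(P, a, n). poly_at_mono P (pair_exp V a m) ^ n)) x =
         (\<lambda>(P, a, n). int n * min 0 (int (degree P) * pair_exp V a m)) x"
      using pam_sub[OF cyc_props[OF cy] pz] by (simp add: xe fls_subdegree_pow)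
  qed
  finally show ?thesis
    unfolding ss using x0 p0 by (simp add: lmono_def F V_def fls_const_nonzero)
qed

lemma ss_neg_nz:
  assumes v: "valid_factorization K Cs e F" and nz: "specialized_schur Cs e m F \<noteq> 0"
  shows "specialized_schur Cs e (\<lambda>v. - m v) F \<noteq> 0"
proof -
  obtain \<xi> b fs where F: "F = (\<xi>, b, fs)" by (cases F) auto
  define V where "V = var_set Cs e"
  define xs where "xs = map (\<lambda>(P, a, n). poly_at_mono P (pair_exp V a m) ^ n) fs"
  define ys where "ys = map (\<lambda>(P, a, n). poly_at_mono P (pair_exp V a (\<lambda>v. - m v)) ^ n) fs"
  have ss: "specialized_schur Cs e m F = fls_const \<xi> * lmono (pair_exp V b m) * prod_list xs"
    unfolding specialized_schur_def F xs_def V_def by simp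
  have ss2: "specialized_schur Cs e (\<lambda>v. - m v) F = fls_const \<xi> * lmono (pair_exp V b (\<lambda>v. - m v)) * prod_list ys"
    unfolding specialized_schur_def F ys_def V_def by simp
  from nz have x0: "\<xi> \<noteq> 0" and p0: "prod_list xs \<noteq> 0" unfolding ss by auto
  from p0 have nx: "0 \<notin> set xs" by (auto simp: prod_list_zero_iff)
  have fsv: "\<And>P a n. (P,a,n) \<in> set fs \<Longrightarrow> K_cyclotomic K P \<and> n > 0"
    using v unfolding valid_factorization_def F by auto
  have "0 \<notin> set ys"
  proof
    assume "0 \<in> set ys"
    then obtain P a n where x: "(P,a,n) \<in> set fs"
      and z: "poly_at_mono P (pair_exp V a (\<lambda>v. - m v)) ^ n = 0" unfolding ys_def by auto
    have pw: "poly_at_mono P (pair_exp V a m) ^ n \<noteq> 0" using nx x unfolding xs_def by force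
    have cy: "K_cyclotomic K P" using fsv x by auto
    show False
    proof (cases "pair_exp V a m = 0")
      case True then show ?thesis using z pw by (simp add: pe_neg)
    next
      case False
      then have "poly_at_mono P (pair_exp V a (\<lambda>v. - m v)) \<noteq> 0"
        by (intro pam_nz cyc_props[OF cy]) (simp add: pe_neg)
      then show ?thesis using z by simp
    qed
  qed
  then have "prod_list ys \<noteq> 0" by (auto simp: prod_list_zero_iff)
  then show ?thesis unfolding ss2 using x0 by (simp add: lmono_def fls_const_nonzero)
qed

definition ev :: "('c \<times> nat) set \<Rightarrow> ('c \<times> nat \<Rightarrow> int) \<Rightarrow> 'c linform \<Rightarrow> rat" where
  "ev V m f = (\<Sum>v\<in>V. f v * of_int (m v))"

lemma ev_fd: "ev V m (factor_degree P a) = of_nat (degree P) * of_int (pair_exp V a m)"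
  unfolding ev_def factor_degree_def pair_exp_def
  by (simp add: sum_distrib_left of_int_sum mult.assoc)

lemma ev_lin:
  assumes "finite S"
  shows "ev V m (\<lambda>v. of_int (b v) + (\<Sum>f\<in>S. c f * f v)) = of_int (pair_exp V b m) + (\<Sum>f\<in>S. c f * ev V m f)"
  unfolding ev_def pair_exp_def
  by (simp add: distrib_right sum.distrib sum_distrib_right sum_distrib_left of_int_sum
      mult.assoc sum.swap[of _ S V])

lemma of_int_sum_list_map: "(of_int (sum_list (map g xs)) :: rat) = sum_list (map (\<lambda>x. of_int (g x)) xs)"
  by (induction xs) auto

lemma sum_list_map_neg: "sum_list (map (\<lambda>x. - (g x :: int)) xs) = - sum_list (map g xs)"
  by (induction xs) auto

lemma regroup:
  assumes "finite D" "(\<lambda>(P,a,n). factor_degree P a) ` set fs \<subseteq> D"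
  shows "(\<Sum>f\<in>D. of_nat (sum_list (map (\<lambda>(P,a,n). if factor_degree P a = f then n else 0) fs)) * g f)
     = sum_list (map (\<lambda>(P,a,n). of_nat n * (g (factor_degree P a) :: rat)) fs)"
  using assms(2)
proof (induction fs)
  case Nil then show ?case by simp
next
  case (Cons x fs)
  obtain P a n where xe: "x = (P,a,n)" by (cases x) auto
  have fd: "factor_degree P a \<in> D" using Cons.prems xe by auto
  have "(\<Sum>f\<in>D. of_nat (sum_list (map (\<lambda>(P,a,n). if factor_degree P a = f then n else 0) (x # fs))) * g f)
      = (\<Sum>f\<in>D. (if factor_degree P a = f then of_nat n * g f else 0))
        + (\<Sum>f\<in>D. of_nat (sum_list (map (\<lambda>(P,a,n). if factor_degree P a = f then n else 0) fs)) * g f)"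
    by (auto simp add: xe distrib_right sum.distrib[symmetric] intro!: sum.cong)
  also have "(\<Sum>f\<in>D. (if factor_degree P a = f then of_nat n * g f else 0)) = of_nat n * g (factor_degree P a)"
    using fd assms(1) by (simp add: sum.delta')
  finally show ?case using Cons by (simp add: xe)
qed

lemma finite_var_set: "finite Cs \<Longrightarrow> finite (var_set Cs e)"
proof -
  assume "finite Cs"
  have "var_set Cs e = Sigma Cs (\<lambda>C. {..<e C})" unfolding var_set_def by auto
  then show ?thesis using \<open>finite Cs\<close> by auto
qed

lemma min_neg_rat: "(of_int (min 0 (- x)) :: rat) = - max 0 (of_int x)"
  by (simp add: min_def max_def)

lemma main_F:
  assumes v: "valid_factorization K Cs e F" and nz: "specialized_schur Cs e m F \<noteq> 0"
    and fin: "finite Cs"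
    and sg: "\<forall>f\<in>factor_degrees F. (ev (var_set Cs e) m f < 0 \<longrightarrow> \<epsilon> f = -1) \<and>
                                    (ev (var_set Cs e) m f > 0 \<longrightarrow> \<epsilon> f = 1)"
  shows "of_int (spec_valuation Cs e m F) = ev (var_set Cs e) m (generic_valuation F \<epsilon>)"
    and "of_int (spec_degree Cs e m F) = ev (var_set Cs e) m (generic_degree F \<epsilon>)"
proof -
  obtain \<xi> b fs where F: "F = (\<xi>, b, fs)" by (cases F) auto
  define V where "V = var_set Cs e"
  have finV: "finite V" using fin finite_var_set V_def by auto
  define FD where "FD = factor_degrees F"
  have FDe: "FD = (\<lambda>(P,a,n). factor_degree P a) ` set fs"
    unfolding FD_def factor_degrees_def F by simp
  have finFD: "finite FD" unfolding FDe by simp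
  have cF: "\<And>f. fd_coeff F f = sum_list (map (\<lambda>(P,a,n). if factor_degree P a = f then n else 0) fs)"
    unfolding fd_coeff_def F by simp
  have RG: "\<And>g. (\<Sum>f\<in>FD. of_nat (fd_coeff F f) * g f) = sum_list (map (\<lambda>(P,a,n). of_nat n * (g (factor_degree P a) :: rat)) fs)"
    unfolding cF by (rule regroup[OF finFD]) (simp add: FDe)
  have nz2: "specialized_schur Cs e (\<lambda>v. - m v) F \<noteq> 0" by (rule ss_neg_nz[OF v nz])
  have "of_int (spec_valuation Cs e m F) = (of_int (pair_exp V b m) :: rat)
      + sum_list (map (\<lambda>(P,a,n). of_nat n * min 0 (ev V m (factor_degree P a))) fs)"
    using ss_formula[OF v nz] unfolding spec_valuation_def
    by (simp add: F V_def of_int_sum_list_map ev_fd of_int_min split_def)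
  also have "sum_list (map (\<lambda>(P,a,n). of_nat n * min 0 (ev V m (factor_degree P a))) fs)
      = (\<Sum>f\<in>FD. of_nat (fd_coeff F f) * min 0 (ev V m f))"
    using RG[of "\<lambda>f. min 0 (ev V m f)"] by simp
  also have "\<dots> = (\<Sum>f\<in>{f\<in>FD. \<epsilon> f = -1}. of_nat (fd_coeff F f) * ev V m f)"
    unfolding sum.inter_filter[OF finFD]
  proof (rule sum.cong[OF refl])
    fix f assume f: "f \<in> FD"
    show "of_nat (fd_coeff F f) * min 0 (ev V m f) = (if \<epsilon> f = -1 then of_nat (fd_coeff F f) * ev V m f else 0)"
      using sg f unfolding FD_def V_def
      by (cases "ev (var_set Cs e) m f < 0"; cases "ev (var_set Cs e) m f > 0") (auto simp: min_def)
  qed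
  also have "of_int (pair_exp V b m) + (\<Sum>f\<in>{f\<in>FD. \<epsilon> f = -1}. of_nat (fd_coeff F f) * ev V m f) = ev V m (generic_valuation F \<epsilon>)"
    unfolding generic_valuation_def
    by (subst ev_lin) (use finFD in \<open>auto simp: FD_def F\<close>)
  finally show "of_int (spec_valuation Cs e m F) = ev (var_set Cs e) m (generic_valuation F \<epsilon>)"
    by (simp add: V_def)
  have evn: "\<And>f. ev V (\<lambda>v. - m v) f = - ev V m f" unfolding ev_def by (simp add: sum_negf)
  have "of_int (spec_degree Cs e m F) = (of_int (pair_exp V b m) :: rat)
      + sum_list (map (\<lambda>(P,a,n). of_nat n * max 0 (ev V m (factor_degree P a))) fs)"
  proof -
    have "spec_degree Cs e m F = pair_exp V b m
        + sum_list (map (\<lambda>x. - (case x of (P,a,n) \<Rightarrow> int n * min 0 (int (degree P) * - pair_exp V a m))) fs)"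
      using ss_formula[OF v nz2] unfolding spec_degree_def
      by (simp add: F V_def pe_neg sum_list_map_neg)
    then show ?thesis
      by (simp add: of_int_sum_list_map ev_fd split_def min_neg_rat del: of_int_min)
  qed
  also have "sum_list (map (\<lambda>(P,a,n). of_nat n * max 0 (ev V m (factor_degree P a))) fs)
      = (\<Sum>f\<in>FD. of_nat (fd_coeff F f) * max 0 (ev V m f))"
    using RG[of "\<lambda>f. max 0 (ev V m f)"] by simp
  also have "\<dots> = (\<Sum>f\<in>{f\<in>FD. \<epsilon> f = 1}. of_nat (fd_coeff F f) * ev V m f)"
    unfolding sum.inter_filter[OF finFD]
  proof (rule sum.cong[OF refl])
    fix f assume f: "f \<in> FD"
    show "of_nat (fd_coeff F f) * max 0 (ev V m f) = (if \<epsilon> f = 1 then of_nat (fd_coeff F f) * ev V m f else 0)"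
      using sg f unfolding FD_def V_def
      by (cases "ev (var_set Cs e) m f < 0"; cases "ev (var_set Cs e) m f > 0") (auto simp: max_def)
  qed
  also have "of_int (pair_exp V b m) + (\<Sum>f\<in>{f\<in>FD. \<epsilon> f = 1}. of_nat (fd_coeff F f) * ev V m f) = ev V m (generic_degree F \<epsilon>)"
    unfolding generic_degree_def
    by (subst ev_lin) (use finFD in \<open>auto simp: FD_def F\<close>)
  finally show "of_int (spec_degree Cs e m F) = ev (var_set Cs e) m (generic_degree F \<epsilon>)"
    by (simp add: V_def)
qed

lemma fd_nonzero:
  assumes v: "valid_factorization K Cs e F" and f: "f \<in> factor_degrees F"
  shows "\<exists>w\<in>var_set Cs e. f w \<noteq> 0"
proof -
  obtain \<xi> b fs where F: "F = (\<xi>, b, fs)" by (cases F) auto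
  from f obtain P a n where x: "(P,a,n) \<in> set fs" and fe: "f = factor_degree P a"
    unfolding factor_degrees_def F by auto
  from v x have cy: "K_cyclotomic K P" and g: "Gcd (a ` var_set Cs e) = 1"
    unfolding valid_factorization_def F by auto
  have "\<exists>w\<in>var_set Cs e. a w \<noteq> 0"
  proof (rule ccontr)
    assume "\<not> ?thesis"
    then have "a ` var_set Cs e \<subseteq> {0}" by auto
    then have "Gcd (a ` var_set Cs e) = 0" by (simp add: Gcd_0_iff)
    then show False using g by simp
  qed
  then obtain w where "w \<in> var_set Cs e" "a w \<noteq> 0" by auto
  moreover have "degree P > 0" using cy unfolding K_cyclotomic_def by auto
  ultimately show ?thesis unfolding fe factor_degree_def by auto
qed

lemma ev_scale: "ev V m (\<lambda>v. q * f v) = q * ev V m f"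
  unfolding ev_def by (simp add: sum_distrib_left mult.assoc)

lemma sign_map_exists:
  assumes finV: "finite V" and nzf: "\<And>f. f \<in> FS \<Longrightarrow> \<exists>w\<in>V. f w \<noteq> 0"
  shows "\<exists>\<epsilon>. good_sign_map FS \<epsilon> \<and>
     (\<forall>f\<in>FS. (ev V m f < 0 \<longrightarrow> \<epsilon> f = -1) \<and> (ev V m f > 0 \<longrightarrow> \<epsilon> f = 1))"
proof -
  obtain vs where vs: "set vs = V" using finite_list[OF finV] by auto
  define H where "H f k = (if k = 0 then ev V m f else f (vs ! (k - 1)))" for f and k :: nat
  define L where "L f = (LEAST k. H f k \<noteq> 0)" for f
  define \<epsilon> where "\<epsilon> f = (if H f (L f) < 0 then -1 else (1::int))" for f
  have ex: "\<exists>k. H f k \<noteq> 0" if "f \<in> FS" for f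
  proof -
    from nzf[OF that] obtain w where w: "w \<in> V" "f w \<noteq> 0" by blast
    then obtain i where "i < length vs" "vs ! i = w" using vs by (auto simp: in_set_conv_nth)
    then have "H f (Suc i) \<noteq> 0" using w by (simp add: H_def)
    then show ?thesis by blast
  qed
  have HL: "H f (L f) \<noteq> 0" if "f \<in> FS" for f
    unfolding L_def using ex[OF that] by (rule LeastI_ex)
  have Hs: "H (\<lambda>v. q * f v) k = q * H f k" for q f k
    by (simp add: H_def ev_scale)
  have Ls: "L (\<lambda>v. q * f v) = L f" if "q \<noteq> 0" for q f
    unfolding L_def Hs using that by simp
  have good: "good_sign_map FS \<epsilon>"
    unfolding good_sign_map_def
  proof (intro conjI ballI impI)
    fix f assume "f \<in> FS" then show "\<epsilon> f \<in> {-1, 1}" by (simp add: \<epsilon>_def)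
  next
    fix f1 f2 assume f2: "f2 \<in> FS" and eq: "fd_equiv f1 f2"
    then obtain q where q: "q > 0" "f1 = (\<lambda>v. q * f2 v)" unfolding fd_equiv_def by auto
    have "L f1 = L f2" unfolding q(2) using q(1) Ls[of q f2] by simp
    then show "\<epsilon> f1 = \<epsilon> f2" unfolding \<epsilon>_def using q(1)
      by (simp add: q(2) Hs mult_less_0_iff)
  next
    fix f1 f2 assume f2: "f2 \<in> FS" and eq: "fd_equiv f1 (\<lambda>v. - f2 v)"
    then obtain q where q: "q > 0" "f1 = (\<lambda>v. (-q) * f2 v)" unfolding fd_equiv_def by auto
    have "H f2 (L f2) \<noteq> 0" using HL[OF f2] .
    moreover have "L f1 = L f2" unfolding q(2) using q(1) Ls[of "-q" f2] by simp
    moreover have "H f1 (L f2) = -q * H f2 (L f2)" using Hs[of "-q" f2] q(2) by simp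
    ultimately show "\<epsilon> f1 = - \<epsilon> f2" unfolding \<epsilon>_def using q(1)
      by (auto simp: mult_less_0_iff zero_less_mult_iff)
  qed
  have "\<forall>f\<in>FS. (ev V m f < 0 \<longrightarrow> \<epsilon> f = -1) \<and> (ev V m f > 0 \<longrightarrow> \<epsilon> f = 1)"
  proof (intro ballI conjI impI)
    fix f assume "ev V m f < 0"
    then have "H f 0 \<noteq> 0" by (simp add: H_def)
    then have "L f = 0" unfolding L_def by (rule Least_eq_0)
    then show "\<epsilon> f = -1" using \<open>ev V m f < 0\<close> by (simp add: \<epsilon>_def H_def)
  next
    fix f assume "ev V m f > 0"
    then have "H f 0 \<noteq> 0" by (simp add: H_def)
    then have "L f = 0" unfolding L_def by (rule Least_eq_0)
    then show "\<epsilon> f = 1" using \<open>ev V m f > 0\<close> by (simp add: \<epsilon>_def H_def)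
  qed
  with good show ?thesis by blast
qed

theorem proposition5p9:
  fixes K :: "complex set" and Cs :: "'c set" and e :: "'c \<Rightarrow> nat"
    and m :: "'c \<times> nat \<Rightarrow> int" and Fchi Fpsi :: "'c factorization"
  assumes K: "cyclotomic_number_field K"
    and Cs: "finite Cs" "\<forall>C\<in>Cs. e C \<ge> 2"
    and phi: "cyclotomic_specialization K Cs e m"
    and chi: "valid_factorization K Cs e Fchi"
    and psi: "valid_factorization K Cs e Fpsi"
    and nz_chi: "specialized_schur Cs e m Fchi \<noteq> 0"
    and nz_psi: "specialized_schur Cs e m Fpsi \<noteq> 0"
  shows "((\<forall>\<epsilon>. good_sign_map (factor_degrees Fchi \<union> factor_degrees Fpsi) \<epsilon> \<longrightarrow>
              generic_valuation Fchi \<epsilon> = generic_valuation Fpsi \<epsilon>)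
           \<longrightarrow> spec_valuation Cs e m Fchi = spec_valuation Cs e m Fpsi)
       \<and> ((\<forall>\<epsilon>. good_sign_map (factor_degrees Fchi \<union> factor_degrees Fpsi) \<epsilon> \<longrightarrow>
              generic_degree Fchi \<epsilon> = generic_degree Fpsi \<epsilon>)
           \<longrightarrow> spec_degree Cs e m Fchi = spec_degree Cs e m Fpsi)"
proof -
  define V where "V = var_set Cs e"
  define FS where "FS = factor_degrees Fchi \<union> factor_degrees Fpsi"
  have finV: "finite V" using Cs(1) finite_var_set V_def by auto
  have "\<exists>w\<in>V. f w \<noteq> 0" if "f \<in> FS" for f
    using that fd_nonzero[OF chi] fd_nonzero[OF psi] unfolding FS_def V_def by auto
  then obtain \<epsilon> where good: "good_sign_map FS \<epsilon>"
    and sg: "\<forall>f\<in>FS. (ev V m f < 0 \<longrightarrow> \<epsilon> f = -1) \<and> (ev V m f > 0 \<longrightarrow> \<epsilon> f = 1)"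
    using sign_map_exists[OF finV] by blast
  have sgc: "\<forall>f\<in>factor_degrees Fchi. (ev (var_set Cs e) m f < 0 \<longrightarrow> \<epsilon> f = -1) \<and>
                                    (ev (var_set Cs e) m f > 0 \<longrightarrow> \<epsilon> f = 1)"
    using sg unfolding FS_def V_def by auto
  have sgp: "\<forall>f\<in>factor_degrees Fpsi. (ev (var_set Cs e) m f < 0 \<longrightarrow> \<epsilon> f = -1) \<and>
                                    (ev (var_set Cs e) m f > 0 \<longrightarrow> \<epsilon> f = 1)"
    using sg unfolding FS_def V_def by auto
  note c = main_F[OF chi nz_chi Cs(1) sgc] and p = main_F[OF psi nz_psi Cs(1) sgp]
  show ?thesis
  proof (intro conjI impI)
    assume h: "\<forall>\<epsilon>. good_sign_map (factor_degrees Fchi \<union> factor_degrees Fpsi) \<epsilon> \<longrightarrow>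
              generic_valuation Fchi \<epsilon> = generic_valuation Fpsi \<epsilon>"
    then have "generic_valuation Fchi \<epsilon> = generic_valuation Fpsi \<epsilon>" using good FS_def by auto
    then have "(of_int (spec_valuation Cs e m Fchi) :: rat) = of_int (spec_valuation Cs e m Fpsi)"
      using c(1) p(1) by simp
    then show "spec_valuation Cs e m Fchi = spec_valuation Cs e m Fpsi" by simp
  next
    assume h: "\<forall>\<epsilon>. good_sign_map (factor_degrees Fchi \<union> factor_degrees Fpsi) \<epsilon> \<longrightarrow>
              generic_degree Fchi \<epsilon> = generic_degree Fpsi \<epsilon>"
    then have "generic_degree Fchi \<epsilon> = generic_degree Fpsi \<epsilon>" using good FS_def by auto
    then have "(of_int (spec_degree Cs e m Fchi) :: rat) = of_int (spec_degree Cs e m Fpsi)"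
      using c(2) p(2) by simp
    then show "spec_degree Cs e m Fchi = spec_degree Cs e m Fpsi" by simp
  qed
qed

end
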